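(* Let $K=\{(z_1,z_2)\in\mathbb C^2:|z_1|^2+|z_2|^2\le1\}$ be the closed Euclidean unit ball. Then $\tau^-(K)=1/\sqrt2$, $c(K)=1/\sqrt2$ and $C(K)=1$. Moreover, for every multi-index $\alpha(i)=(N,N)$ with $N\ge1$, one has $\inf\{\|P\|_K:P\in\mathcal P(\alpha(i))\}=2^{-N}$, so that $W_{\infty,\alpha(i)}(K,1)=1$.
   Context: Monomials $z^\alpha=z_1^{\alpha_1}\cdots z_n^{\alpha_n}$, $\alpha\in\mathbb N_0^n$, are enumerated as $e_0=1,e_1,e_2,\dots$ with $e_i=z^{\alpha(i)}$. The enumeration is such that $|\alpha(i)|=\alpha_1+\dots+\alpha_n$ is non-decreasing in $i$. Among multi-indices of equal length it is ordered lexicographically: for $|\alpha|=|\beta|$, $\beta\prec\alpha$ iff for some $l$ one has $\alpha_l<\beta_l$ and $\alpha_k=\beta_k$ for all $k<l$. $\mathcal P(\alpha(i))$ denotes the set of polynomials of the form $e_i+\sum_{j<i}c_je_j$ with $c_j\in\mathbb C$. For compact $K\subset\mathbb C^n$, $\|\cdot\|_K$ denotes the sup norm on $K$. Set $t_i(K)=\inf\{\|P\|_K:P\in\mathcal P(\alpha(i))\}$ and $\tau^-(K)=\liminf_{i\to\infty} t_i(K)^{1/|\alpha(i)|}$. For compact $K\subset\mathbb C^n$, let $V_K(z)=\sup\{u(z): u\text{ plurisubharmonic on }\mathbb C^n,\ u(z)\le\log|z|+O(1),\ u\le0\text{ on }K\}$ and let $V_K^*$ be its upper semicontinuous regularization.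 With $|z|=(\sum|z_\nu|^2)^{1/2}$ and $\|z\|=\max_\nu|z_\nu|$, define $c(K)=\exp[-\limsup_{z\to\infty}(V_K^*(z)-\log\|z\|)]$ and $C(K)=\exp[-\limsup_{z\to\infty}(V_K^*(z)-\log|z|)]$. For a bounded upper semicontinuous $\widehat w\ge0$ on $K$ whose positivity set is non-pluripolar, the sup-norm Widom factor is $W_{\infty,\alpha(i)}(K,\widehat w)=\inf\{\|\widehat w P\|_K:P\in\mathcal P(\alpha(i))\}/[\tau^-(K)]^{|\alpha(i)|}$; here $\widehat w\equiv1$. *)

theory Defs
  imports "HOL-Analysis.Analysis" "HOL-Library.Liminf_Limsup"
begin

text \<open>Points of C^2 are pairs; the library norm on complex \<times> complex is the Euclidean one
  |z| = sqrt(|z1|^2+|z2|^2).  Multi-indices in N_0^2 are pairs of naturals.\<close>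

type_synonym pt = "complex \<times> complex"

definition maxnorm :: "pt \<Rightarrow> real" where
  "maxnorm z = max (cmod (fst z)) (cmod (snd z))"

definition mlen :: "nat \<times> nat \<Rightarrow> nat" where
  "mlen a = fst a + snd a"

definition mi_less :: "nat \<times> nat \<Rightarrow> nat \<times> nat \<Rightarrow> bool" where
  "mi_less b a \<longleftrightarrow> mlen b < mlen a \<or>
     (mlen b = mlen a \<and> (fst a < fst b \<or> (fst a = fst b \<and> snd a < snd b)))"

definition alpha :: "nat \<Rightarrow> nat \<times> nat" where
  "alpha i = (THE b. card {g. mi_less g b} = i)"

definition deg :: "nat \<Rightarrow> nat" where
  "deg i = mlen (alpha i)"

definition monom :: "nat \<times> nat \<Rightarrow> pt \<Rightarrow> complex" where
  "monom a z = fst z ^ fst a * snd z ^ snd a"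

text \<open>The element e_i + sum_{j<i} c_j e_j of P(alpha(i)).\<close>
definition Ppoly :: "nat \<Rightarrow> (nat \<Rightarrow> complex) \<Rightarrow> pt \<Rightarrow> complex" where
  "Ppoly i c z = monom (alpha i) z + (\<Sum>j<i. c j * monom (alpha j) z)"

definition supnorm :: "pt set \<Rightarrow> (pt \<Rightarrow> real) \<Rightarrow> real" where
  "supnorm K f = Sup ((\<lambda>z. \<bar>f z\<bar>) ` K)"

definition t_weighted :: "pt set \<Rightarrow> (pt \<Rightarrow> real) \<Rightarrow> nat \<Rightarrow> real" where
  "t_weighted K w i = Inf {supnorm K (\<lambda>z. w z * cmod (Ppoly i c z)) | c. True}"

definition t_cheb :: "pt set \<Rightarrow> nat \<Rightarrow> real" where
  "t_cheb K i = Inf {supnorm K (\<lambda>z. cmod (Ppoly i c z)) | c. True}"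

definition tau_minus :: "pt set \<Rightarrow> ereal" where
  "tau_minus K = liminf (\<lambda>i. ereal (t_cheb K i powr (1 / real (deg i))))"

definition widom_inf :: "pt set \<Rightarrow> (pt \<Rightarrow> real) \<Rightarrow> nat \<Rightarrow> real" where
  "widom_inf K w i = t_weighted K w i / (real_of_ereal (tau_minus K)) ^ deg i"

text \<open>Plurisubharmonic functions on C^2 (values in [-infinity, infinity)):
  upper semicontinuous and subharmonic on every complex line, i.e. the sub-mean value
  inequality u(a) <= (1/2pi) int_0^{2pi} u(a + e^{i theta} b) d theta holds for all a, b.
  The integral of an (usc, hence bounded above on the circle) extended-real function is
  taken as int u^+ - int u^-.\<close>

definition usc :: "(pt \<Rightarrow> ereal) \<Rightarrow> bool" where
  "usc u \<longleftrightarrow> (\<forall>x. Limsup (at x) u \<le> u x)"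

definition circ_pt :: "pt \<Rightarrow> pt \<Rightarrow> real \<Rightarrow> pt" where
  "circ_pt a b \<theta> = (fst a + cis \<theta> * fst b, snd a + cis \<theta> * snd b)"

definition circ_mean :: "(pt \<Rightarrow> ereal) \<Rightarrow> pt \<Rightarrow> pt \<Rightarrow> ereal" where
  "circ_mean u a b =
     (enn2ereal (\<integral>\<^sup>+ \<theta>. e2ennreal (max 0 (u (circ_pt a b \<theta>))) * indicator {0..2*pi} \<theta> \<partial>lborel)
    - enn2ereal (\<integral>\<^sup>+ \<theta>. e2ennreal (max 0 (- u (circ_pt a b \<theta>))) * indicator {0..2*pi} \<theta> \<partial>lborel))
    / ereal (2 * pi)"

definition psh :: "(pt \<Rightarrow> ereal) \<Rightarrow> bool" where
  "psh u \<longleftrightarrow> usc u \<and> (\<forall>z. u z < \<infinity>) \<and> (\<forall>a b. u a \<le> circ_mean u a b)"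

definition V_ext :: "pt set \<Rightarrow> pt \<Rightarrow> ereal" where
  "V_ext K z = Sup {u z | u. psh u
      \<and> (\<exists>C R. \<forall>w. norm w \<ge> R \<longrightarrow> u w \<le> ereal (ln (norm w) + C))
      \<and> (\<forall>w\<in>K. u w \<le> 0)}"

definition usc_reg :: "(pt \<Rightarrow> ereal) \<Rightarrow> pt \<Rightarrow> ereal" where
  "usc_reg f z = max (f z) (Limsup (at z) f)"

definition exp_neg_ereal :: "ereal \<Rightarrow> ereal" where
  "exp_neg_ereal L = (if L = \<infinity> then 0 else if L = -\<infinity> then \<infinity> else ereal (exp (- real_of_ereal L)))"

definition cap_c :: "pt set \<Rightarrow> ereal" where
  "cap_c K = exp_neg_ereal
     (Limsup at_infinity (\<lambda>z. usc_reg (V_ext K) z - ereal (ln (maxnorm z))))"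

definition cap_C :: "pt set \<Rightarrow> ereal" where
  "cap_C K = exp_neg_ereal
     (Limsup at_infinity (\<lambda>z. usc_reg (V_ext K) z - ereal (ln (norm z))))"

end

theory Submission
  imports Defs "HOL-Complex_Analysis.Complex_Analysis"
begin


lemma mean_holo:
  assumes S: "open S" "cball 0 1 \<subseteq> S" and hol: "f holomorphic_on S"
  shows "((\<lambda>\<theta>. f (cis \<theta>)) has_integral (of_real (2*pi) * f 0)) {0..2*pi}"
proof -
  have "((\<lambda>u. f u/(u-0)) has_contour_integral (2 * of_real pi * \<i> * f 0)) (circlepath 0 1)"
  proof (rule Cauchy_integral_circlepath)
    show "continuous_on (cball 0 1) f"
      using hol S holomorphic_on_imp_continuous_on holomorphic_on_subset by blast
    show "f holomorphic_on ball 0 1" using hol S holomorphic_on_subset ball_subset_cball by blast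
  qed auto
  then have "((\<lambda>t. f (0 + complex_of_real 1 * cis t) / (0 + complex_of_real 1 * cis t - 0) * complex_of_real 1 * \<i> * cis t) has_integral (2 * of_real pi * \<i> * f 0)) {0..2*pi}"
    unfolding circlepath_def by (subst (asm) has_contour_integral_part_circlepath_iff) auto
  then have "((\<lambda>t. f (cis t) * \<i>) has_integral (2 * of_real pi * \<i> * f 0)) {0..2*pi}"
    by (rule has_integral_eq[rotated]) (simp add: cis_neq_zero)
  from has_integral_mult_right[OF this, of "-\<i>"] show ?thesis
    by (simp add: algebra_simps)
qed

lemma mean_holo_Re:
  assumes S: "open S" "cball 0 1 \<subseteq> S" and hol: "f holomorphic_on S"
  shows "((\<lambda>\<theta>. Re (f (cis \<theta>))) has_integral (2*pi * Re (f 0))) {0..2*pi}"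
  using has_integral_Re[OF mean_holo[OF assms]] by simp

lemma mean_ln:
  fixes \<alpha> \<beta> :: complex
  assumes "cmod \<beta> < cmod \<alpha>"
  shows "((\<lambda>\<theta>. ln (cmod (\<alpha> + cis \<theta> * \<beta>))) has_integral (2*pi * ln (cmod \<alpha>))) {0..2*pi}"
proof -
  define t where "t = \<beta> / \<alpha>"
  have a0: "\<alpha> \<noteq> 0" using assms by auto
  have t1: "cmod t < 1" using assms a0 by (simp add: t_def norm_divide field_simps)
  define S where "S = {\<zeta>. cmod \<zeta> * cmod t < 1}"
  define f where "f \<zeta> = of_real (ln (cmod \<alpha>)) + Ln (1 + \<zeta> * t)" for \<zeta>
  have oS: "open S" unfolding S_def
    by (intro open_Collect_less continuous_intros)
  have cS: "cball 0 1 \<subseteq> S" using t1 unfolding S_def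
    by (auto simp: mult_le_cancel_right1 intro: le_less_trans[OF mult_right_mono])
  have pos: "0 < Re (1 + \<zeta> * t)" if "\<zeta> \<in> S" for \<zeta>
  proof -
    have "\<bar>Re (\<zeta> * t)\<bar> \<le> cmod (\<zeta> * t)" by (rule abs_Re_le_cmod)
    also have "\<dots> < 1" using that by (simp add: S_def norm_mult)
    finally show ?thesis by simp
  qed
  have hol: "f holomorphic_on S" unfolding f_def
  proof (intro holomorphic_intros)
    show "1 + z * t \<notin> \<real>\<^sub>\<le>\<^sub>0" if "z \<in> S" for z
      using pos[OF that] by (auto simp: complex_nonpos_Reals_iff)
  qed
  have eq: "Re (f (cis \<theta>)) = ln (cmod (\<alpha> + cis \<theta> * \<beta>))" for \<theta>
  proof -
    have nz: "1 + cis \<theta> * t \<noteq> 0" proof - have "cis \<theta> \<in> S" using cS by auto from pos[OF this] show ?thesis by (metis less_irrefl zero_complex.sel(1)) qed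
    have "Re (f (cis \<theta>)) = ln (cmod \<alpha>) + ln (cmod (1 + cis \<theta> * t))"
      using nz by (simp add: f_def Re_Ln)
    also have "\<dots> = ln (cmod \<alpha> * cmod (1 + cis \<theta> * t))"
      using nz a0 by (simp add: ln_mult)
    also have "cmod \<alpha> * cmod (1 + cis \<theta> * t) = cmod (\<alpha> + cis \<theta> * \<beta>)"
      using a0 by (simp add: t_def norm_mult[symmetric] algebra_simps)
    finally show ?thesis .
  qed
  have "Re (f 0) = ln (cmod \<alpha>)" by (simp add: f_def)
  with mean_holo_Re[OF oS cS hol] eq show ?thesis by simp
qed

lemma mean_sq:
  fixes a :: complex and r :: real
  shows "((\<lambda>\<theta>. (cmod (a + r * cis \<theta>))^2) has_integral (2*pi * ((cmod a)^2 + r^2))) {0..2*pi}"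
proof -
  define f where "f \<zeta> = of_real ((cmod a)^2 + r^2) + 2 * cnj a * r * \<zeta>" for \<zeta>
  have hol: "f holomorphic_on UNIV" unfolding f_def by (intro holomorphic_intros)
  have eq: "Re (f (cis \<theta>)) = (cmod (a + r * cis \<theta>))^2" for \<theta>
  proof -
    have "(cmod (a + r * cis \<theta>))^2 = (Re a + r * cos \<theta>)^2 + (Im a + r * sin \<theta>)^2"
      by (simp add: cmod_power2)
    also have "\<dots> = (Re a)^2 + (Im a)^2 + r^2 * ((sin \<theta>)^2 + (cos \<theta>)^2) + 2 * r * (Re a * cos \<theta> + Im a * sin \<theta>)"
      by algebra
    also have "\<dots> = (Re a)^2 + (Im a)^2 + r^2 + 2 * r * (Re a * cos \<theta> + Im a * sin \<theta>)"
      by simp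
    also have "\<dots> = Re (f (cis \<theta>))"
      by (simp add: f_def cmod_power2 algebra_simps)
    finally show ?thesis by simp
  qed
  have "Re (f 0) = (cmod a)^2 + r^2" by (simp add: f_def)
  with mean_holo_Re[OF open_UNIV _ hol] eq show ?thesis by simp
qed

lemma nn_part:
  assumes "continuous_on {0..2*pi} G"
  shows "enn2ereal (\<integral>\<^sup>+ \<theta>. e2ennreal (max 0 (ereal (G \<theta>))) * indicator {0..2*pi} \<theta> \<partial>lborel)
       = ereal (integral {0..2*pi} (\<lambda>\<theta>. max 0 (G \<theta>)))"
proof -
  have c: "continuous_on {0..2*pi} (\<lambda>\<theta>. max 0 (G \<theta>))"
    using assms by (intro continuous_intros)
  have hi: "((\<lambda>\<theta>. max 0 (G \<theta>)) has_integral (integral {0..2*pi} (\<lambda>\<theta>. max 0 (G \<theta>)))) {0..2*pi}"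
    using integrable_continuous_interval[OF c] by (simp add: has_integral_integral)
  have "(\<integral>\<^sup>+ \<theta>. e2ennreal (max 0 (ereal (G \<theta>))) * indicator {0..2*pi} \<theta> \<partial>lborel)
      = (\<integral>\<^sup>+ \<theta>. ennreal (indicator {0..2*pi} \<theta> * max 0 (G \<theta>)) \<partial>lborel)"
    by (intro nn_integral_cong) (auto simp: indicator_def max_def e2ennreal_neg)
  also have "\<dots> = ennreal (integral {0..2*pi} (\<lambda>\<theta>. max 0 (G \<theta>)))"
    by (rule nn_integral_has_integral_lebesgue[OF _ hi]) auto
  finally show ?thesis
    by (simp add: enn2ereal_ennreal integral_nonneg[OF integrable_continuous_interval[OF c]])
qed

lemma int_parts:
  assumes "continuous_on {0..2*pi} (G::real\<Rightarrow>real)"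
  shows "integral {0..2*pi} (\<lambda>\<theta>. max 0 (G \<theta>)) - integral {0..2*pi} (\<lambda>\<theta>. max 0 (- G \<theta>)) = integral {0..2*pi} G"
proof -
  have c0: "continuous_on {0..2*pi} (\<lambda>\<theta>. - G \<theta>)"
    using assms by (intro continuous_intros)
  have c1: "continuous_on {0..2*pi} (\<lambda>\<theta>. max 0 (G \<theta>))" "continuous_on {0..2*pi} (\<lambda>\<theta>. max 0 (- G \<theta>))"
    using assms c0 by (auto intro!: continuous_intros)
  have "integral {0..2*pi} (\<lambda>\<theta>. max 0 (G \<theta>)) - integral {0..2*pi} (\<lambda>\<theta>. max 0 (- G \<theta>))
     = integral {0..2*pi} (\<lambda>\<theta>. max 0 (G \<theta>) - max 0 (- G \<theta>))"
    by (rule integral_diff[symmetric]) (use c1 integrable_continuous_interval in auto)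
  also have "(\<lambda>\<theta>. max 0 (G \<theta>) - max 0 (- G \<theta>)) = G" by (auto simp: max_def)
  finally show ?thesis .
qed

lemma circ_mean_le:
  assumes c: "continuous_on {0..2*pi} F"
    and le: "\<And>\<theta>. \<theta> \<in> {0..2*pi} \<Longrightarrow> u (circ_pt a b \<theta>) \<le> ereal (F \<theta>)"
  shows "circ_mean u a b \<le> ereal (integral {0..2*pi} F / (2*pi))"
proof -
  have c2: "continuous_on {0..2*pi} (\<lambda>\<theta>. - F \<theta>)" using c by (intro continuous_intros)
  have P: "enn2ereal (\<integral>\<^sup>+ \<theta>. e2ennreal (max 0 (u (circ_pt a b \<theta>))) * indicator {0..2*pi} \<theta> \<partial>lborel)
     \<le> ereal (integral {0..2*pi} (\<lambda>\<theta>. max 0 (F \<theta>)))"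
    unfolding nn_part[OF c, symmetric] less_eq_ennreal.rep_eq[symmetric]
    by (intro nn_integral_mono) (auto simp: indicator_def intro!: e2ennreal_mono max.mono le)
  have N: "ereal (integral {0..2*pi} (\<lambda>\<theta>. max 0 (- F \<theta>))) \<le>
     enn2ereal (\<integral>\<^sup>+ \<theta>. e2ennreal (max 0 (- u (circ_pt a b \<theta>))) * indicator {0..2*pi} \<theta> \<partial>lborel)"
  proof -
    have neg: "\<And>\<theta>. \<theta>\<in>{0..2*pi} \<Longrightarrow> ereal (- F \<theta>) \<le> - u (circ_pt a b \<theta>)"
      using le by (metis ereal_minus_le_minus uminus_ereal.simps(1))
    have "ereal (integral {0..2*pi} (\<lambda>\<theta>. max 0 (- F \<theta>))) =
      enn2ereal (\<integral>\<^sup>+ \<theta>. e2ennreal (max 0 (ereal (- F \<theta>))) * indicator {0..2*pi} \<theta> \<partial>lborel)"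
      using nn_part[OF c2] by simp
    also have "\<dots> \<le> enn2ereal (\<integral>\<^sup>+ \<theta>. e2ennreal (max 0 (- u (circ_pt a b \<theta>))) * indicator {0..2*pi} \<theta> \<partial>lborel)"
      unfolding less_eq_ennreal.rep_eq[symmetric]
      by (intro nn_integral_mono) (auto simp: indicator_def intro!: e2ennreal_mono max.mono neg)
    finally show ?thesis .
  qed
  have "circ_mean u a b \<le> (ereal (integral {0..2*pi} (\<lambda>\<theta>. max 0 (F \<theta>))) - ereal (integral {0..2*pi} (\<lambda>\<theta>. max 0 (- F \<theta>)))) / ereal (2*pi)"
    unfolding circ_mean_def by (intro ereal_divide_right_mono ereal_minus_mono P N) auto
  also have "\<dots> = ereal (integral {0..2*pi} F / (2*pi))"
    using int_parts[OF c] by simp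
  finally show ?thesis .
qed

lemma circ_mean_eq:
  assumes c: "continuous_on {0..2*pi} F"
    and eq: "\<And>\<theta>. \<theta> \<in> {0..2*pi} \<Longrightarrow> u (circ_pt a b \<theta>) = ereal (F \<theta>)"
  shows "circ_mean u a b = ereal (integral {0..2*pi} F / (2*pi))"
proof -
  have c2: "continuous_on {0..2*pi} (\<lambda>\<theta>. - F \<theta>)" using c by (intro continuous_intros)
  have P: "enn2ereal (\<integral>\<^sup>+ \<theta>. e2ennreal (max 0 (u (circ_pt a b \<theta>))) * indicator {0..2*pi} \<theta> \<partial>lborel)
     = ereal (integral {0..2*pi} (\<lambda>\<theta>. max 0 (F \<theta>)))"
    unfolding nn_part[OF c, symmetric]
    by (intro arg_cong[where f=enn2ereal] nn_integral_cong) (auto simp: indicator_def eq)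
  have N: "enn2ereal (\<integral>\<^sup>+ \<theta>. e2ennreal (max 0 (- u (circ_pt a b \<theta>))) * indicator {0..2*pi} \<theta> \<partial>lborel)
     = ereal (integral {0..2*pi} (\<lambda>\<theta>. max 0 (- F \<theta>)))"
  proof -
    have "ereal (integral {0..2*pi} (\<lambda>\<theta>. max 0 (- F \<theta>))) =
      enn2ereal (\<integral>\<^sup>+ \<theta>. e2ennreal (max 0 (ereal (- F \<theta>))) * indicator {0..2*pi} \<theta> \<partial>lborel)"
      using nn_part[OF c2] by simp
    also have "\<dots> = enn2ereal (\<integral>\<^sup>+ \<theta>. e2ennreal (max 0 (- u (circ_pt a b \<theta>))) * indicator {0..2*pi} \<theta> \<partial>lborel)"
      by (intro arg_cong[where f=enn2ereal] nn_integral_cong) (auto simp: indicator_def eq)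
    finally show ?thesis by simp
  qed
  show ?thesis unfolding circ_mean_def P N using int_parts[OF c] by simp
qed

definition lnp :: "real \<Rightarrow> real" where "lnp x = ln (max 1 x)"

lemma lnp_nonneg: "0 \<le> lnp x" by (simp add: lnp_def)
lemma lnp_mono: "x \<le> y \<Longrightarrow> lnp x \<le> lnp y" by (simp add: lnp_def)
lemma lnp_le1: "x \<le> 1 \<Longrightarrow> lnp x = 0" by (simp add: lnp_def max_def)
lemma lnp_gt1: "1 \<le> x \<Longrightarrow> lnp x = ln x" by (simp add: lnp_def max_def)
lemma ln_le_lnp: "0 < x \<Longrightarrow> ln x \<le> lnp x" by (simp add: lnp_def)

lemma continuous_on_lnp[continuous_intros]:
  "continuous_on S f \<Longrightarrow> continuous_on S (\<lambda>x. lnp (f x))"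
  unfolding lnp_def by (intro continuous_intros) auto

lemma cont_lnp_circ: "continuous_on A (\<lambda>\<theta>. lnp (cmod (\<alpha> + cis \<theta> * \<beta>)))"
  by (intro continuous_intros)

lemma cont_ln_circ:
  assumes "cmod \<beta> < cmod \<alpha>"
  shows "continuous_on A (\<lambda>\<theta>. ln (cmod (\<alpha> + cis \<theta> * \<beta>)))"
proof -
  have "\<alpha> + cis \<theta> * \<beta> \<noteq> 0" for \<theta>
  proof
    assume "\<alpha> + cis \<theta> * \<beta> = 0"
    then have "\<alpha> = - (cis \<theta> * \<beta>)" by (simp add: eq_neg_iff_add_eq_0)
    then have "cmod \<alpha> = cmod \<beta>" by (simp add: norm_mult)
    with assms show False by simp
  qed
  then show ?thesis by (intro continuous_intros) auto
qed

lemma jensen_lt: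
  assumes "cmod \<beta> < cmod \<alpha>"
  shows "2*pi * lnp (cmod \<alpha>) \<le> integral {0..2*pi} (\<lambda>\<theta>. lnp (cmod (\<alpha> + cis \<theta> * \<beta>)))"
proof (cases "cmod \<alpha> \<le> 1")
  case True
  then show ?thesis
    using integral_nonneg[OF integrable_continuous_interval[OF cont_lnp_circ], of 0 "2*pi" \<alpha> \<beta>]
    by (simp add: lnp_le1 lnp_nonneg)
next
  case False
  have pos: "0 < cmod (\<alpha> + cis \<theta> * \<beta>)" for \<theta>
  proof -
    have "cmod \<alpha> - cmod (cis \<theta> * \<beta>) \<le> cmod (\<alpha> + cis \<theta> * \<beta>)"
      by (metis norm_diff_ineq norm_minus_cancel diff_minus_eq_add)
    moreover have "cmod (cis \<theta> * \<beta>) = cmod \<beta>" by (simp add: norm_mult)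
    ultimately show ?thesis using assms by linarith
  qed
  have "2*pi * lnp (cmod \<alpha>) = integral {0..2*pi} (\<lambda>\<theta>. ln (cmod (\<alpha> + cis \<theta> * \<beta>)))"
    using mean_ln[OF assms] False by (simp add: lnp_gt1 integral_unique)
  also have "\<dots> \<le> integral {0..2*pi} (\<lambda>\<theta>. lnp (cmod (\<alpha> + cis \<theta> * \<beta>)))"
    by (intro integral_le integrable_continuous_interval cont_lnp_circ cont_ln_circ[OF assms] ln_le_lnp pos)
  finally show ?thesis .
qed

lemma jensen_lnp:
  "2*pi * lnp (cmod \<alpha>) \<le> integral {0..2*pi} (\<lambda>\<theta>. lnp (cmod (\<alpha> + cis \<theta> * \<beta>)))"
proof -
  consider "cmod \<beta> < cmod \<alpha>" | "cmod \<alpha> < cmod \<beta>" | "cmod \<alpha> = cmod \<beta>" by linarith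
  then show ?thesis
  proof cases
    case 1 then show ?thesis by (rule jensen_lt)
  next
    case 2
    have eq: "cmod (cnj \<beta> + cis \<theta> * cnj \<alpha>) = cmod (\<alpha> + cis \<theta> * \<beta>)" for \<theta>
    proof -
      have cc: "cis \<theta> * cnj (cis \<theta>) = 1" by (simp add: cis_cnj cis_mult)
      have "cis \<theta> * cnj (\<alpha> + cis \<theta> * \<beta>) = cis \<theta> * cnj \<alpha> + (cis \<theta> * cnj (cis \<theta>)) * cnj \<beta>"
        by (simp add: algebra_simps)
      then have "cnj \<beta> + cis \<theta> * cnj \<alpha> = cis \<theta> * cnj (\<alpha> + cis \<theta> * \<beta>)"
        unfolding cc by simp
      then show ?thesis by (simp only: norm_mult norm_cis complex_mod_cnj mult_1)
    qed
    have "2*pi * lnp (cmod \<alpha>) \<le> 2*pi * lnp (cmod \<beta>)"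
      using 2 by (intro mult_left_mono lnp_mono) auto
    also have "\<dots> \<le> integral {0..2*pi} (\<lambda>\<theta>. lnp (cmod (cnj \<beta> + cis \<theta> * cnj \<alpha>)))"
      using jensen_lt[of "cnj \<alpha>" "cnj \<beta>"] 2 by simp
    finally show ?thesis unfolding eq .
  next
    case 3
    show ?thesis
    proof (cases "cmod \<alpha> \<le> 1")
      case True
      then show ?thesis
        using integral_nonneg[OF integrable_continuous_interval[OF cont_lnp_circ], of 0 "2*pi" \<alpha> \<beta>]
        by (simp add: lnp_le1 lnp_nonneg)
    next
    case False
    define s where "s k = 1 - 1 / (real k + 2)" for k
    define f where "f k \<theta> = lnp (cmod (\<alpha> + cis \<theta> * (of_real (s k) * \<beta>)))" for k \<theta>
    have s01: "0 < s k" "s k < 1" for k by (auto simp: s_def field_simps)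
    have sl: "s \<longlonglongrightarrow> 1"
    proof -
      have "(\<lambda>k. 1 / (real k + 2)) \<longlonglongrightarrow> 0"
        using LIMSEQ_ignore_initial_segment[OF lim_inverse_n', of 2]
        by (simp add: inverse_eq_divide add.commute)
      from tendsto_diff[OF tendsto_const[of 1] this] show ?thesis by (simp add: s_def[abs_def])
    qed
    have fi: "f k integrable_on {0..2*pi}" for k
      unfolding f_def by (intro integrable_continuous_interval cont_lnp_circ)
    have hi: "(\<lambda>\<theta>. lnp (cmod \<alpha> + cmod \<beta>)) integrable_on {0..2*pi}" by (rule integrable_const_ivl)
    have bd: "norm (f k \<theta>) \<le> lnp (cmod \<alpha> + cmod \<beta>)" for k \<theta>
    proof -
      have "cmod (\<alpha> + cis \<theta> * (of_real (s k) * \<beta>)) \<le> cmod \<alpha> + cmod (cis \<theta> * (of_real (s k) * \<beta>))"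
        by (rule norm_triangle_ineq)
      also have "\<dots> \<le> cmod \<alpha> + cmod \<beta>"
        using s01[of k] by (simp add: norm_mult abs_of_pos mult_left_le_one_le)
      finally show ?thesis unfolding f_def using lnp_nonneg by (simp add: lnp_mono)
    qed
    have conv: "(\<lambda>k. f k \<theta>) \<longlonglongrightarrow> lnp (cmod (\<alpha> + cis \<theta> * \<beta>))" for \<theta>
    proof -
      have "continuous_on UNIV (\<lambda>x::real. lnp (cmod (\<alpha> + cis \<theta> * (of_real x * \<beta>))))"
        by (intro continuous_intros)
      then have "isCont (\<lambda>x::real. lnp (cmod (\<alpha> + cis \<theta> * (of_real x * \<beta>)))) 1"
        by (simp add: continuous_on_eq_continuous_at)
      from isCont_tendsto_compose[OF this sl] show ?thesis by (simp add: f_def)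
    qed
    have lim: "(\<lambda>k. integral {0..2*pi} (f k)) \<longlonglongrightarrow> integral {0..2*pi} (\<lambda>\<theta>. lnp (cmod (\<alpha> + cis \<theta> * \<beta>)))"
      by (rule dominated_convergence(2)[OF fi hi bd conv])
    have "2*pi * lnp (cmod \<alpha>) \<le> integral {0..2*pi} (f k)" for k
    proof -
      have "cmod (of_real (s k) * \<beta>) < cmod \<alpha>"
      proof -
        have "s k * cmod \<beta> < 1 * cmod \<beta>"
          using s01[of k] 3 False by (intro mult_strict_right_mono) auto
        then show ?thesis using s01[of k] 3 by (simp add: norm_mult abs_of_pos)
      qed
      from jensen_lt[OF this] show ?thesis by (simp add: f_def[abs_def])
    qed
    then show ?thesis by (intro LIMSEQ_le_const[OF lim]) auto
  qed
  qed
qed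




lemma usc_attains_max:
  fixes h :: "'a::metric_space \<Rightarrow> ereal"
  assumes A: "compact A" "A \<noteq> {}"
    and P: "\<And>x t. x \<in> A \<Longrightarrow> h x < t \<Longrightarrow> \<exists>\<delta>>0. \<forall>y\<in>A. dist y x < \<delta> \<longrightarrow> h y < t"
  shows "\<exists>x\<in>A. \<forall>y\<in>A. h y \<le> h x"
proof (rule ccontr)
  assume "\<not> ?thesis"
  then have "\<forall>x\<in>A. \<exists>y\<in>A. h x < h y" by (auto simp: not_le)
  then obtain Y where Y: "\<And>x. x \<in> A \<Longrightarrow> Y x \<in> A \<and> h x < h (Y x)" by metis
  have "\<forall>x\<in>A. \<exists>\<delta>>0. \<forall>y\<in>A. dist y x < \<delta> \<longrightarrow> h y < h (Y x)"
    using P Y by blast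
  then obtain D where D: "\<And>x. x \<in> A \<Longrightarrow> D x > 0 \<and> (\<forall>y\<in>A. dist y x < D x \<longrightarrow> h y < h (Y x))"
    by metis
  have cov: "A \<subseteq> \<Union> ((\<lambda>x. ball x (D x)) ` A)"
  proof
    fix x assume "x \<in> A"
    then have "x \<in> ball x (D x)" using D by auto
    with \<open>x \<in> A\<close> show "x \<in> \<Union> ((\<lambda>x. ball x (D x)) ` A)" by blast
  qed
  obtain C' where C': "C' \<subseteq> A" "finite C'" "A \<subseteq> \<Union> ((\<lambda>x. ball x (D x)) ` C')"
    by (rule compactE_image[OF A(1) _ cov]) auto
  have "C' \<noteq> {}" using C' A(2) by auto
  then have "Max ((\<lambda>i. h (Y i)) ` C') \<in> (\<lambda>i. h (Y i)) ` C'" using C'(2) by (intro Max_in) auto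
  then obtain j where j1: "j \<in> C'" and jeq: "h (Y j) = Max ((\<lambda>i. h (Y i)) ` C')" by auto
  have j: "j \<in> C'" "\<forall>i\<in>C'. h (Y i) \<le> h (Y j)"
    using j1 C'(2) unfolding jeq by (auto intro!: Max_ge)
  have "Y j \<in> A" using Y j C' by auto
  then obtain i where i: "i \<in> C'" "Y j \<in> ball i (D i)" using C' by auto
  then have "h (Y j) < h (Y i)" using D[of i] C' \<open>Y j \<in> A\<close> by (auto simp: dist_commute)
  with j i show False by (meson not_le)
qed

lemma maxprin:
  fixes v :: "complex \<Rightarrow> ereal" and c \<epsilon> \<rho> :: real
  assumes usc: "\<And>x t. v x < t \<Longrightarrow> \<exists>\<delta>>0. \<forall>y. dist y x < \<delta> \<longrightarrow> v y < t"
    and fin: "\<And>x. v x < \<infinity>"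
    and sub: "\<And>z0 r F. 0 < r \<Longrightarrow> continuous_on {0..2*pi} F \<Longrightarrow>
        (\<forall>\<theta>\<in>{0..2*pi}. v (z0 + of_real r * cis \<theta>) \<le> ereal (F \<theta>)) \<Longrightarrow>
        v z0 \<le> ereal (integral {0..2*pi} F / (2*pi))"
    and in1: "\<And>w. cmod w = 1 \<Longrightarrow> v w \<le> 0"
    and out: "\<And>w. cmod w = \<rho> \<Longrightarrow> v w \<le> ereal (c * ln \<rho>)"
    and \<rho>: "1 < \<rho>" and \<epsilon>: "0 < \<epsilon>"
    and l: "1 \<le> cmod l" "cmod l \<le> \<rho>"
  shows "v l \<le> ereal (c * ln (cmod l) + \<epsilon> * (1 + \<rho>^2))"
proof -
  define A where "A = {w::complex. 1 \<le> cmod w \<and> cmod w \<le> \<rho>}"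
  define \<psi> where "\<psi> w = c * ln (cmod w) - \<epsilon> * (cmod w)^2" for w
  define h where "h w = v w - ereal (\<psi> w)" for w
  have Aeq: "A = cball 0 \<rho> - ball 0 1" by (auto simp: A_def)
  have cA: "compact A" unfolding Aeq by (intro compact_diff compact_cball open_ball)
  have neA: "A \<noteq> {}" using \<rho> by (auto simp: A_def intro!: exI[of _ 1])
  have hP: "\<exists>\<delta>>0. \<forall>y\<in>A. dist y x < \<delta> \<longrightarrow> h y < t" if x: "x \<in> A" and hx: "h x < t" for x t
  proof (cases t)
    case PInf
    have "h y < t" for y using fin[of y] PInf by (cases "v y") (auto simp: h_def)
    then show ?thesis by (auto intro: exI[of _ 1])
  next
    case MInf then show ?thesis using hx by simp
  next
    case (real t')
    have vx: "v x < ereal (t' + \<psi> x)"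
      using hx real by (cases "v x") (auto simp: h_def)
    obtain s where s: "v x < ereal s" "s < t' + \<psi> x"
    proof (cases "v x")
      case (real vx) then show ?thesis using vx that[of "(vx + t' + \<psi> x)/2"] by auto
    next
      case PInf then show ?thesis using fin[of x] by simp
    next
      case MInf then show ?thesis using that[of "t' + \<psi> x - 1"] by auto
    qed
    define \<kappa> where "\<kappa> = t' + \<psi> x - s"
    have \<kappa>: "0 < \<kappa>" using s by (simp add: \<kappa>_def)
    obtain d1 where d1: "d1 > 0" "\<And>y. dist y x < d1 \<Longrightarrow> v y < ereal s" using usc[OF s(1)] by blast
    have x0: "x \<noteq> 0" using x by (auto simp: A_def)
    have "continuous (at x) \<psi>" unfolding \<psi>_def using x0 by (intro continuous_intros) auto
    then obtain d2 where d2: "d2 > 0" "\<And>y. dist y x < d2 \<Longrightarrow> dist (\<psi> y) (\<psi> x) < \<kappa>"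
      using \<kappa> unfolding continuous_at_eps_delta by blast
    show ?thesis
    proof (intro exI[of _ "min d1 d2"] conjI ballI impI)
      fix y assume "y \<in> A" "dist y x < min d1 d2"
      then have "v y < ereal s" "dist (\<psi> y) (\<psi> x) < \<kappa>" using d1 d2 by auto
      then have "s \<le> t' + \<psi> y" by (simp add: \<kappa>_def dist_real_def abs_less_iff)
      with \<open>v y < ereal s\<close> have "v y < ereal (t' + \<psi> y)" using less_le_trans by fastforce
      then show "h y < t" using real by (cases "v y") (auto simp: h_def)
    qed (use d1 d2 in auto)
  qed
  obtain l0 where l0: "l0 \<in> A" "\<And>y. y \<in> A \<Longrightarrow> h y \<le> h l0"
    using usc_attains_max[OF cA neA hP] by blast
  have key: "h l0 \<le> ereal (\<epsilon> * (1 + \<rho>^2))"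
  proof -
    have b: "1 \<le> cmod l0" "cmod l0 \<le> \<rho>" using l0(1) by (auto simp: A_def)
    consider "cmod l0 = 1" | "cmod l0 = \<rho>" | "1 < cmod l0" "cmod l0 < \<rho>"
      by (cases "cmod l0 = 1"; cases "cmod l0 = \<rho>") (use b in auto)
    then show ?thesis
    proof cases
      case 1
      have "h l0 \<le> 0 - ereal (- \<epsilon>)"
        unfolding h_def \<psi>_def using in1[OF 1] 1 by (intro ereal_minus_mono) auto
      also have "\<dots> \<le> ereal (\<epsilon> * (1 + \<rho>^2))" using \<epsilon> by simp
      finally show ?thesis .
    next
      case 2
      have "h l0 \<le> ereal (c * ln \<rho>) - ereal (c * ln \<rho> - \<epsilon> * \<rho>^2)"
        unfolding h_def \<psi>_def using out[OF 2] 2 by (intro ereal_minus_mono) auto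
      also have "\<dots> \<le> ereal (\<epsilon> * (1 + \<rho>^2))" using \<epsilon> by (simp add: algebra_simps)
      finally show ?thesis .
    next
      case 3
      show ?thesis
      proof (cases "h l0")
        case MInf then show ?thesis by simp
      next
        case PInf then show ?thesis using fin[of l0] by (cases "v l0") (auto simp: h_def)
      next
        case (real M)
        define r where "r = min (cmod l0 - 1) (\<rho> - cmod l0) / 2"
        have r: "0 < r" "r < cmod l0" "cmod l0 - r \<ge> 1" "cmod l0 + r \<le> \<rho>"
        proof -
          have q: "r \<le> (cmod l0 - 1)/2" "r \<le> (\<rho> - cmod l0)/2" "0 < r"
            using 3 unfolding r_def by (auto simp: min_def)
          show "0 < r" using q by linarith
          show "r < cmod l0" using q 3 by argo
          show "cmod l0 - r \<ge> 1" using q 3 by argo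
          show "cmod l0 + r \<le> \<rho>" using q 3 by argo
        qed
        define F where "F \<theta> = M + c * ln (cmod (l0 + cis \<theta> * of_real r)) - \<epsilon> * (cmod (l0 + of_real r * cis \<theta>))^2" for \<theta>
        have nz: "l0 + cis \<theta> * of_real r \<noteq> 0" for \<theta>
        proof
          assume "l0 + cis \<theta> * of_real r = 0"
          then have "l0 = - (cis \<theta> * of_real r)" by (simp add: eq_neg_iff_add_eq_0)
          then have "cmod l0 = r" using r by (simp add: norm_mult)
          with r show False by simp
        qed
        have cF: "continuous_on {0..2*pi} F" unfolding F_def using nz
          by (intro continuous_intros) auto
        have inA: "l0 + of_real r * cis \<theta> \<in> A" for \<theta>
        proof -
          have "cmod l0 - cmod (of_real r * cis \<theta>) \<le> cmod (l0 + of_real r * cis \<theta>)"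
            by (metis norm_diff_ineq norm_minus_cancel diff_minus_eq_add)
          moreover have "cmod (l0 + of_real r * cis \<theta>) \<le> cmod l0 + cmod (of_real r * cis \<theta>)"
            by (rule norm_triangle_ineq)
          moreover have "cmod (of_real r * cis \<theta>) = r" using r by (simp add: norm_mult)
          ultimately show ?thesis using r by (auto simp: A_def)
        qed
        have le: "\<forall>\<theta>\<in>{0..2*pi}. v (l0 + of_real r * cis \<theta>) \<le> ereal (F \<theta>)"
        proof
          fix \<theta>
          have "h (l0 + of_real r * cis \<theta>) \<le> ereal M" using l0(2)[OF inA] real by simp
          then have "v (l0 + of_real r * cis \<theta>) \<le> ereal (M + \<psi> (l0 + of_real r * cis \<theta>))"
            by (cases "v (l0 + of_real r * cis \<theta>)") (auto simp: h_def)
          then show "v (l0 + of_real r * cis \<theta>) \<le> ereal (F \<theta>)"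
            by (simp add: F_def \<psi>_def mult.commute add_diff_eq)
        qed
        have hi1: "((\<lambda>\<theta>. ln (cmod (l0 + cis \<theta> * of_real r))) has_integral (2*pi * ln (cmod l0))) {0..2*pi}"
          using mean_ln[of "of_real r" l0] r by simp
        have hi2: "((\<lambda>\<theta>. (cmod (l0 + of_real r * cis \<theta>))^2) has_integral (2*pi * ((cmod l0)^2 + r^2))) {0..2*pi}"
          by (rule mean_sq)
        have i0: "((\<lambda>x. M) has_integral M * (2*pi)) {0..2*pi}"
          using has_integral_const_real[of M 0 "2*pi"] by (simp add: mult.commute)
        have i1: "((\<lambda>\<theta>. c * ln (cmod (l0 + cis \<theta> * of_real r))) has_integral c * (2*pi * ln (cmod l0))) {0..2*pi}"
          using has_integral_cmul[OF hi1, of c] by simp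
        have i2: "((\<lambda>\<theta>. \<epsilon> * (cmod (l0 + of_real r * cis \<theta>))^2) has_integral \<epsilon> * (2*pi * ((cmod l0)^2 + r^2))) {0..2*pi}"
          using has_integral_cmul[OF hi2, of \<epsilon>] by simp
        have "(F has_integral (M * (2*pi) + c * (2*pi * ln (cmod l0)) - \<epsilon> * (2*pi * ((cmod l0)^2 + r^2)))) {0..2*pi}"
          unfolding F_def[abs_def] by (rule has_integral_diff[OF has_integral_add[OF i0 i1] i2])
        then have "integral {0..2*pi} F / (2*pi) = M + c * ln (cmod l0) - \<epsilon> * ((cmod l0)^2 + r^2)"
          by (simp add: integral_unique field_simps)
        then have "v l0 \<le> ereal (M + c * ln (cmod l0) - \<epsilon> * ((cmod l0)^2 + r^2))"
          using sub[OF r(1) cF le] by simp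
        also have "\<dots> < ereal (M + \<psi> l0)"
          using r \<epsilon> by (simp add: \<psi>_def)
        also have "ereal (M + \<psi> l0) = v l0"
          using real by (cases "v l0") (auto simp: h_def)
        finally show ?thesis by simp
      qed
    qed
  qed
  have lA: "l \<in> A" using l by (simp add: A_def)
  have "h l \<le> ereal (\<epsilon> * (1 + \<rho>^2))" using l0(2)[OF lA] key by simp
  then have "v l \<le> ereal (\<epsilon> * (1 + \<rho>^2) + \<psi> l)"
    by (cases "v l") (auto simp: h_def)
  also have "\<dots> \<le> ereal (c * ln (cmod l) + \<epsilon> * (1 + \<rho>^2))"
    using \<epsilon> by (simp add: \<psi>_def)
  finally show ?thesis .
qed




definition Kb :: "pt set" where "Kb = {z. (cmod (fst z))\<^sup>2 + (cmod (snd z))\<^sup>2 \<le> 1}"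

lemma norm_pt: "norm (z::pt) = sqrt ((cmod (fst z))^2 + (cmod (snd z))^2)"
  by (cases z) (simp add: norm_Pair)

lemma norm_pt_sq: "(norm (z::pt))^2 = (cmod (fst z))^2 + (cmod (snd z))^2"
  by (simp add: norm_pt)

lemma Kb_iff: "z \<in> Kb \<longleftrightarrow> norm z \<le> 1"
proof -
  have "norm z \<le> 1 \<longleftrightarrow> (norm z)^2 \<le> 1"
    by (metis abs_norm_cancel abs_square_le_1)
  moreover have "z \<in> Kb \<longleftrightarrow> (norm z)^2 \<le> 1" by (simp add: Kb_def norm_pt_sq)
  ultimately show ?thesis by simp
qed

lemma at_pt_nonbot: "at (x::pt) \<noteq> bot"
proof -
  have "x islimpt UNIV"
  proof (rule islimpt_approachable[THEN iffD2], intro allI impI)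
    fix e :: real assume e: "0 < e"
    let ?y = "(fst x + of_real (e/2), snd x)"
    have "?y \<noteq> x" using e by (cases x) auto
    moreover have "dist ?y x < e" using e by (cases x) (simp add: dist_norm norm_Pair)
    ultimately show "\<exists>x'\<in>UNIV. x' \<noteq> x \<and> dist x' x < e" by blast
  qed
  then show ?thesis by (simp add: trivial_limit_at_iff)
qed

lemma usc_cont:
  assumes "continuous_on UNIV (g :: pt \<Rightarrow> real)"
  shows "usc (\<lambda>w. ereal (g w))"
  unfolding usc_def
proof
  fix x
  have "(g \<longlongrightarrow> g x) (at x)" using assms unfolding continuous_on_def by blast
  then have "((\<lambda>w. ereal (g w)) \<longlongrightarrow> ereal (g x)) (at x)" by (rule tendsto_ereal)
  then have "Limsup (at x) (\<lambda>w. ereal (g w)) = ereal (g x)"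
    by (rule lim_imp_Limsup[OF at_pt_nonbot])
  then show "Limsup (at x) (\<lambda>w. ereal (g w)) \<le> ereal (g x)" by simp
qed

lemma usc_lt:
  assumes "usc u" "u x < t"
  shows "\<exists>\<delta>>0. \<forall>y. dist y x < \<delta> \<longrightarrow> u y < t"
proof -
  have "Limsup (at x) u < t" using assms unfolding usc_def by (meson le_less_trans)
  then have "eventually (\<lambda>y. u y < t) (at x)" by (rule Limsup_lessD)
  then obtain d where d: "d > 0" "\<And>y. y \<noteq> x \<Longrightarrow> dist y x < d \<Longrightarrow> u y < t"
    unfolding eventually_at by auto
  show ?thesis
  proof (intro exI[of _ d] conjI allI impI)
    fix y assume "dist y x < d"
    then show "u y < t" using d assms(2) by (cases "y = x") auto
  qed (use d in auto)
qed

lemma cs_ineq: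
  fixes x1 x2 y1 y2 :: real
  shows "x1 * y1 + x2 * y2 \<le> sqrt (x1^2 + x2^2) * sqrt (y1^2 + y2^2)"
proof -
  have "(x1 * y1 + x2 * y2)^2 = (x1^2 + x2^2) * (y1^2 + y2^2) - (x1 * y2 - x2 * y1)^2"
    by algebra
  then have "(x1 * y1 + x2 * y2)^2 \<le> (x1^2 + x2^2) * (y1^2 + y2^2)" by simp
  then have "x1 * y1 + x2 * y2 \<le> sqrt ((x1^2 + x2^2) * (y1^2 + y2^2))" by (rule real_le_rsqrt)
  then show ?thesis by (simp add: real_sqrt_mult)
qed

lemma cs_pt:
  "cmod (fst w * cnj (fst z) + snd w * cnj (snd z)) \<le> norm (w::pt) * norm (z::pt)"
proof -
  have "cmod (fst w * cnj (fst z) + snd w * cnj (snd z)) \<le> cmod (fst w) * cmod (fst z) + cmod (snd w) * cmod (snd z)"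
    by (metis norm_triangle_ineq norm_mult complex_mod_cnj)
  also have "\<dots> \<le> norm w * norm z" unfolding norm_pt by (rule cs_ineq)
  finally show ?thesis .
qed

definition fz :: "pt \<Rightarrow> pt \<Rightarrow> complex" where
  "fz z w = (fst w * cnj (fst z) + snd w * cnj (snd z)) / of_real (norm z)"

definition uz :: "pt \<Rightarrow> pt \<Rightarrow> ereal" where
  "uz z w = ereal (lnp (cmod (fz z w)))"

lemma fz_le: "z \<noteq> 0 \<Longrightarrow> cmod (fz z w) \<le> norm w"
  using cs_pt[of w z] by (simp add: fz_def norm_divide divide_le_eq)

lemma fz_self: "z \<noteq> 0 \<Longrightarrow> fz z z = of_real (norm z)"
proof -
  assume z: "z \<noteq> 0"
  have "fst z * cnj (fst z) + snd z * cnj (snd z) = of_real ((norm z)^2)"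
    unfolding norm_pt_sq by (simp add: complex_mult_cnj cmod_power2)
  moreover have "norm z \<noteq> 0" using z by simp
  ultimately show ?thesis by (simp add: fz_def power2_eq_square)
qed

lemma fz_circ: "fz z (circ_pt a b \<theta>) = fz z a + cis \<theta> * fz z b"
  by (simp add: fz_def circ_pt_def algebra_simps add_divide_distrib)

lemma psh_uz: "psh (uz z)"
proof -
  have c: "continuous_on UNIV (\<lambda>w. lnp (cmod (fz z w)))"
    unfolding fz_def divide_inverse by (intro continuous_intros)
  have "usc (uz z)" using usc_cont[OF c] by (simp add: uz_def[abs_def])
  moreover have "uz z a \<le> circ_mean (uz z) a b" for a b
  proof -
    have "circ_mean (uz z) a b = ereal (integral {0..2*pi} (\<lambda>\<theta>. lnp (cmod (fz z a + cis \<theta> * fz z b))) / (2*pi))"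
      by (rule circ_mean_eq[OF cont_lnp_circ]) (simp add: uz_def fz_circ)
    moreover have "lnp (cmod (fz z a)) \<le> integral {0..2*pi} (\<lambda>\<theta>. lnp (cmod (fz z a + cis \<theta> * fz z b))) / (2*pi)"
      using jensen_lnp[of "fz z a" "fz z b"] by (simp add: pos_le_divide_eq mult.commute)
    ultimately show ?thesis by (simp add: uz_def)
  qed
  ultimately show ?thesis by (auto simp: psh_def uz_def)
qed

lemma V_lower:
  assumes "z \<noteq> 0"
  shows "ereal (lnp (norm z)) \<le> V_ext Kb z"
proof -
  have g: "\<forall>w. norm w \<ge> 1 \<longrightarrow> uz z w \<le> ereal (ln (norm w) + 0)"
  proof (intro allI impI)
    fix w :: pt assume w: "norm w \<ge> 1"
    have "lnp (cmod (fz z w)) \<le> lnp (norm w)" using fz_le[OF assms, of w] by (rule lnp_mono)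
    also have "\<dots> = ln (norm w)" using w by (rule lnp_gt1)
    finally show "uz z w \<le> ereal (ln (norm w) + 0)" by (simp add: uz_def)
  qed
  have k: "\<forall>w\<in>Kb. uz z w \<le> 0"
  proof
    fix w assume "w \<in> Kb"
    then have "cmod (fz z w) \<le> 1" using fz_le[OF assms, of w] by (simp add: Kb_iff)
    then show "uz z w \<le> 0" by (simp add: uz_def lnp_le1)
  qed
  have P: "psh (uz z) \<and> (\<exists>C R. \<forall>w. norm w \<ge> R \<longrightarrow> uz z w \<le> ereal (ln (norm w) + C)) \<and> (\<forall>w\<in>Kb. uz z w \<le> 0)"
    using psh_uz g k by blast
  have mem: "uz z z \<in> {u z | u. psh u
      \<and> (\<exists>C R. \<forall>w. norm w \<ge> R \<longrightarrow> u w \<le> ereal (ln (norm w) + C))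
      \<and> (\<forall>w\<in>Kb. u w \<le> 0)}"
    using P by blast
  have "uz z z = ereal (lnp (norm z))" using fz_self[OF assms] by (simp add: uz_def)
  moreover have "uz z z \<le> V_ext Kb z" unfolding V_ext_def using mem by (rule Sup_upper)
  ultimately show ?thesis by simp
qed




lemma V_upper_c:
  fixes u :: "pt \<Rightarrow> ereal" and z :: pt and c :: real
  assumes psh: "psh u" and K: "\<forall>w\<in>Kb. u w \<le> 0"
    and gr: "\<forall>w. norm w \<ge> R \<longrightarrow> u w \<le> ereal (ln (norm w) + C)"
    and z: "1 < norm z" and c: "1 < c"
  shows "u z \<le> ereal (c * ln (norm z))"
proof -
  define n where "n = norm z"
  have n: "1 < n" using z by (simp add: n_def)
  have zn: "z \<noteq> 0" using z by (metis norm_zero not_one_less_zero)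
  define e1 where "e1 = fst z / of_real n"
  define e2 where "e2 = snd z / of_real n"
  define P where "P l = (l * e1, l * e2)" for l :: complex
  have ee: "(cmod e1)^2 + (cmod e2)^2 = 1"
  proof -
    have "(cmod e1)^2 + (cmod e2)^2 = ((cmod (fst z))^2 + (cmod (snd z))^2) / n^2"
      using n by (simp add: e1_def e2_def norm_divide power_divide add_divide_distrib abs_of_pos)
    also have "\<dots> = 1" using zn unfolding n_def norm_pt_sq[symmetric] by simp
    finally show ?thesis .
  qed
  have nP: "norm (P l) = cmod l" for l
  proof -
    have "(norm (P l))^2 = (cmod l)^2 * ((cmod e1)^2 + (cmod e2)^2)"
      by (simp add: P_def norm_pt_sq norm_mult power_mult_distrib algebra_simps)
    then have "(norm (P l))^2 = (cmod l)^2" using ee by simp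
    then show ?thesis by (simp add: power2_eq_iff_nonneg)
  qed
  have Pdiff: "P a - P b = P (a - b)" for a b by (simp add: P_def algebra_simps)
  have dP: "dist (P a) (P b) = dist a b" for a b
    by (simp add: dist_norm Pdiff nP)
  define v where "v l = u (P l)" for l
  define \<rho> where "\<rho> = max (max R 2) (max n (exp (\<bar>C\<bar> / (c - 1))))"
  have \<rho>1: "1 < \<rho>" "n \<le> \<rho>" "R \<le> \<rho>" by (auto simp: \<rho>_def)
  have lr: "\<bar>C\<bar> / (c - 1) \<le> ln \<rho>"
  proof -
    have "exp (\<bar>C\<bar> / (c - 1)) \<le> \<rho>" by (simp add: \<rho>_def)
    then show ?thesis using \<rho>1 by (metis exp_le_cancel_iff exp_ln less_trans zero_less_one)
  qed
  have Cle: "C \<le> (c - 1) * ln \<rho>"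
  proof -
    have "\<bar>C\<bar> \<le> (c - 1) * ln \<rho>" using lr c by (simp add: divide_le_eq mult.commute)
    then show ?thesis by simp
  qed
  have uscu: "usc u" using psh unfolding psh_def by blast
  have fin: "u x < \<infinity>" for x using psh unfolding psh_def by blast
  have usc_v: "\<exists>\<delta>>0. \<forall>y. dist y x < \<delta> \<longrightarrow> v y < t" if vx: "v x < t" for x t
  proof -
    obtain \<delta> where "\<delta> > 0" "\<And>y. dist y (P x) < \<delta> \<Longrightarrow> u y < t"
      using usc_lt[of u "P x" t] uscu vx unfolding v_def by blast
    then show ?thesis by (intro exI[of _ \<delta>]) (auto simp: v_def dP)
  qed
  have sub: "v z0 \<le> ereal (integral {0..2*pi} F / (2*pi))"
    if r: "0 < r" and cF: "continuous_on {0..2*pi} F"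
      and le: "\<forall>\<theta>\<in>{0..2*pi}. v (z0 + of_real r * cis \<theta>) \<le> ereal (F \<theta>)" for z0 r F
  proof -
    have cp: "circ_pt (P z0) (P (of_real r)) \<theta> = P (z0 + of_real r * cis \<theta>)" for \<theta>
      by (simp add: circ_pt_def P_def algebra_simps)
    have "v z0 \<le> circ_mean u (P z0) (P (of_real r))" using psh unfolding psh_def v_def by blast
    also have "\<dots> \<le> ereal (integral {0..2*pi} F / (2*pi))"
      by (rule circ_mean_le[OF cF]) (use le in \<open>simp add: cp v_def\<close>)
    finally show ?thesis .
  qed
  have in1: "v l \<le> 0" if "cmod l = 1" for l
    using K that by (simp add: v_def Kb_iff nP)
  have out: "v l \<le> ereal (c * ln \<rho>)" if "cmod l = \<rho>" for l
  proof -
    have "R \<le> norm (P l)" using that \<rho>1 by (simp add: nP)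
    with gr have "u (P l) \<le> ereal (ln (norm (P l)) + C)" by blast
    then have "v l \<le> ereal (ln \<rho> + C)" using that by (simp add: v_def nP)
    also have "\<dots> \<le> ereal (c * ln \<rho>)" using Cle by (simp add: algebra_simps)
    finally show ?thesis .
  qed
  have finv: "v x < \<infinity>" for x using fin by (simp add: v_def)
  have Pz: "P (of_real n) = z"
    using n by (simp add: P_def e1_def e2_def)
  have "u z \<le> ereal (c * ln n) + ereal e" if e: "0 < e" for e
  proof -
    define \<epsilon> where "\<epsilon> = e / (1 + \<rho>^2)"
    have \<epsilon>: "0 < \<epsilon>" using e by (simp add: \<epsilon>_def add_pos_nonneg)
    have "v (of_real n) \<le> ereal (c * ln (cmod (of_real n :: complex)) + \<epsilon> * (1 + \<rho>^2))"
      by (rule maxprin[where v=v, OF usc_v finv sub in1 out \<rho>1(1) \<epsilon>])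
         (use n \<rho>1 in auto)
    moreover have "\<epsilon> * (1 + \<rho>^2) = e"
    proof -
      have "1 + \<rho>^2 \<noteq> 0" by (metis add_pos_nonneg zero_le_power2 zero_less_one less_irrefl)
      then show ?thesis by (simp add: \<epsilon>_def)
    qed
    ultimately show ?thesis using n by (simp add: v_def Pz)
  qed
  then have "u z \<le> ereal (c * ln n)" by (rule ereal_le_epsilon2)
  then show ?thesis by (simp add: n_def)
qed

lemma V_upper:
  fixes u :: "pt \<Rightarrow> ereal" and z :: pt
  assumes psh: "psh u" and K: "\<forall>w\<in>Kb. u w \<le> 0"
    and gr: "\<forall>w. norm w \<ge> R \<longrightarrow> u w \<le> ereal (ln (norm w) + C)"
    and z: "1 < norm z"
  shows "u z \<le> ereal (ln (norm z))"
proof (rule ereal_le_epsilon2)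
  fix e :: real assume e: "0 < e"
  have l: "0 < ln (norm z)" using z by (rule ln_gt_zero)
  have "u z \<le> ereal ((1 + e / ln (norm z)) * ln (norm z))"
    by (rule V_upper_c[OF psh K gr z]) (use e l in simp)
  also have "(1 + e / ln (norm z)) * ln (norm z) = ln (norm z) + e"
    using l by (simp add: field_simps)
  finally show "u z \<le> ereal (ln (norm z)) + ereal e" by simp
qed

lemma V_eq:
  assumes z: "1 < norm (z::pt)"
  shows "V_ext Kb z = ereal (ln (norm z))"
proof (rule antisym)
  show "V_ext Kb z \<le> ereal (ln (norm z))"
    unfolding V_ext_def
  proof (rule Sup_least)
    fix y assume "y \<in> {u z |u. psh u \<and> (\<exists>C R. \<forall>w. R \<le> norm w \<longrightarrow> u w \<le> ereal (ln (norm w) + C)) \<and> (\<forall>w\<in>Kb. u w \<le> 0)}"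
    then obtain u C R where "y = u z" "psh u" "\<forall>w. R \<le> norm w \<longrightarrow> u w \<le> ereal (ln (norm w) + C)" "\<forall>w\<in>Kb. u w \<le> 0"
      by blast
    then show "y \<le> ereal (ln (norm z))" using V_upper z by blast
  qed
  have "z \<noteq> 0" using z by (metis norm_zero not_one_less_zero)
  from V_lower[OF this] show "ereal (ln (norm z)) \<le> V_ext Kb z"
    using z by (simp add: lnp_gt1)
qed

lemma usc_reg_eq:
  assumes z: "1 < norm (z::pt)"
  shows "usc_reg (V_ext Kb) z = ereal (ln (norm z))"
proof -
  have tn: "((\<lambda>w. norm w) \<longlongrightarrow> norm z) (at z)" by (intro tendsto_intros)
  have ev: "eventually (\<lambda>w. 1 < norm w) (at z)" by (rule order_tendstoD(1)[OF tn z])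
  have "Limsup (at z) (V_ext Kb) = Limsup (at z) (\<lambda>w. ereal (ln (norm w)))"
    by (rule Limsup_eq) (use ev in \<open>auto elim!: eventually_mono simp: V_eq\<close>)
  also have "\<dots> = ereal (ln (norm z))"
  proof (rule lim_imp_Limsup[OF at_pt_nonbot])
    have "z \<noteq> 0" using z by (metis norm_zero not_one_less_zero)
    then show "((\<lambda>w. ereal (ln (norm w))) \<longlongrightarrow> ereal (ln (norm z))) (at z)"
      by (intro tendsto_intros tendsto_ereal) auto
  qed
  finally show ?thesis unfolding usc_reg_def using V_eq[OF z] by simp
qed

lemma capC_Kb: "cap_C Kb = 1"
proof -
  have ev: "eventually (\<lambda>z::pt. 1 < norm z) at_infinity"
    unfolding eventually_at_infinity by (intro exI[of _ 2]) auto
  have "Limsup at_infinity (\<lambda>z. usc_reg (V_ext Kb) z - ereal (ln (norm z))) = Limsup at_infinity (\<lambda>z::pt. 0)"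
    by (rule Limsup_eq) (use ev in \<open>auto elim!: eventually_mono simp: usc_reg_eq\<close>)
  also have "\<dots> = 0" by (rule Limsup_const[OF trivial_limit_at_infinity])
  finally show ?thesis by (simp add: cap_C_def exp_neg_ereal_def)
qed

lemma freq_Limsup:
  assumes "\<And>P. eventually P F \<Longrightarrow> \<exists>x. P x \<and> C \<le> f x"
  shows "C \<le> Limsup F (f :: _ \<Rightarrow> ereal)"
  unfolding Limsup_def
proof (rule INF_greatest)
  fix P assume "P \<in> {P. eventually P F}"
  then obtain x where "P x" "C \<le> f x" using assms by blast
  then show "C \<le> (SUP x\<in>{x. P x}. f x)" by (meson SUP_upper2 mem_Collect_eq)
qed

lemma capc_Kb: "cap_c Kb = ereal (1 / sqrt 2)"
proof -
  define g where "g z = ereal (ln (norm z) - ln (maxnorm z))" for z :: pt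
  have mpos: "0 < maxnorm z" if "1 < norm z" for z :: pt
  proof (rule ccontr)
    assume "\<not> 0 < maxnorm z"
    then have "cmod (fst z) = 0" "cmod (snd z) = 0" by (auto simp: maxnorm_def max_def split: if_splits)
    then have "norm z = 0" by (simp add: norm_pt)
    with that show False by simp
  qed
  have feq: "usc_reg (V_ext Kb) z - ereal (ln (maxnorm z)) = g z" if "1 < norm z" for z
    using that by (simp add: usc_reg_eq g_def)
  have bound: "ln (norm z) - ln (maxnorm z) \<le> ln (sqrt 2)" if z: "1 < norm z" for z :: pt
  proof -
    have m: "0 < maxnorm z" by (rule mpos[OF z])
    have "(norm z)^2 \<le> 2 * (maxnorm z)^2"
    proof -
      have "(cmod (fst z))^2 \<le> (maxnorm z)^2" "(cmod (snd z))^2 \<le> (maxnorm z)^2"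
        by (auto simp: maxnorm_def intro!: power_mono)
      then show ?thesis by (simp add: norm_pt_sq)
    qed
    then have "sqrt ((norm z)^2) \<le> sqrt (2 * (maxnorm z)^2)" by (rule real_sqrt_le_mono)
    then have "norm z \<le> sqrt 2 * maxnorm z" using m by (simp add: real_sqrt_mult)
    then have "ln (norm z) \<le> ln (sqrt 2 * maxnorm z)" using z m by (subst ln_le_cancel_iff) auto
    also have "\<dots> = ln (sqrt 2) + ln (maxnorm z)" using m by (simp add: ln_mult)
    finally show ?thesis by simp
  qed
  have ev: "eventually (\<lambda>z::pt. 1 < norm z) at_infinity"
    unfolding eventually_at_infinity by (intro exI[of _ 2]) auto
  have L: "Limsup at_infinity (\<lambda>z. usc_reg (V_ext Kb) z - ereal (ln (maxnorm z))) = Limsup at_infinity g"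
    by (rule Limsup_eq) (use ev in \<open>auto elim!: eventually_mono simp: feq\<close>)
  have up: "Limsup at_infinity g \<le> ereal (ln (sqrt 2))"
    by (rule Limsup_bounded) (use ev in \<open>auto elim!: eventually_mono simp: g_def bound\<close>)
  have lo: "ereal (ln (sqrt 2)) \<le> Limsup at_infinity g"
  proof (rule freq_Limsup)
    fix P assume "eventually P (at_infinity :: pt filter)"
    then obtain b where b: "\<And>x::pt. b \<le> norm x \<Longrightarrow> P x" unfolding eventually_at_infinity by blast
    define t where "t = max b 2"
    define x where "x = (complex_of_real t, complex_of_real t)"
    have t: "2 \<le> t" "b \<le> t" by (auto simp: t_def)
    have nx: "norm x = sqrt 2 * t"
      using t by (simp add: x_def norm_Pair real_sqrt_mult power2_eq_square[symmetric] abs_of_nonneg)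
    have "1 * t \<le> sqrt 2 * t" by (rule mult_right_mono) (use t in auto)
    then have "t \<le> sqrt 2 * t" by simp
    then have bx: "b \<le> norm x" using t nx by linarith
    have mx: "maxnorm x = t" using t by (simp add: x_def maxnorm_def)
    have "g x = ereal (ln (sqrt 2))"
      using t by (simp add: g_def nx mx ln_mult)
    then show "\<exists>x. P x \<and> ereal (ln (sqrt 2)) \<le> g x" using b[OF bx] by (metis order_refl)
  qed
  have "Limsup at_infinity (\<lambda>z. usc_reg (V_ext Kb) z - ereal (ln (maxnorm z))) = ereal (ln (sqrt 2))"
    using L up lo by simp
  moreover have "exp (- ln (sqrt 2)) = 1 / sqrt 2" by (simp add: exp_minus inverse_eq_divide)
  ultimately show ?thesis by (simp add: cap_c_def exp_neg_ereal_def)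
qed




lemma root_sum:
  fixes M :: nat and d :: int
  assumes M: "0 < M" and d: "\<bar>d\<bar> < int M"
  shows "(\<Sum>k<M. cis (2*pi*d/M)^k) = (if d = 0 then of_nat M else 0)"
proof (cases "d = 0")
  case True then show ?thesis by simp
next
  case False
  define x where "x = cis (2*pi*d/M)"
  have xM: "x ^ M = 1"
  proof -
    have "x ^ M = cis (real M * (2*pi*d/M))" by (simp only: x_def Complex.DeMoivre)
    also have "real M * (2*pi*d/M) = 2 * pi * real_of_int d" using M by simp
    also have "cis (2 * pi * real_of_int d) = 1" by (rule cis_multiple_2pi) simp
    finally show ?thesis .
  qed
  have x1: "x \<noteq> 1"
  proof
    assume "x = 1"
    then have "cos (2*pi*d/M) = 1" unfolding x_def by (metis cis.sel(1) one_complex.sel(1))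
    then obtain k :: int where k: "2*pi*d/M = real_of_int k * 2 * pi" by (auto simp: cos_one_2pi_int)
    then have "real_of_int d = real_of_int k * real M" using M by (simp add: field_simps)
    then have dk: "d = k * int M" by (metis of_int_eq_iff of_int_mult of_int_of_nat_eq)
    have "k \<noteq> 0" using dk False by auto
    then have "int M \<le> \<bar>k\<bar> * int M" using M by (simp add: mult_le_cancel_right1)
    then show False using d dk by (simp add: abs_mult)
  qed
  have "(\<Sum>k<M. x^k) = (1 - x ^ M) / (1 - x)" using x1 by (simp add: sum_gp_strict)
  then show ?thesis using xM False by (simp add: x_def)
qed

lemma root_orth:
  fixes M a p :: nat
  assumes M: "a < M" "p < M"
  shows "(\<Sum>k<M. cnj (cis (2*pi/M))^(k*a) * cis (2*pi/M)^(k*p)) = (if p = a then of_nat M else 0)"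
proof -
  have M0: "0 < M" using M by simp
  have "cnj (cis (2*pi/M))^(k*a) * cis (2*pi/M)^(k*p) = cis (2*pi*(int p - int a)/M)^k" for k
  proof -
    have "cnj (cis (2*pi/M))^(k*a) * cis (2*pi/M)^(k*p) = cis (real (k*a) * (- (2*pi/M)) + real (k*p) * (2*pi/M))"
      by (simp only: cis_cnj Complex.DeMoivre cis_mult)
    also have "real (k*a) * (- (2*pi/M)) + real (k*p) * (2*pi/M) = real k * (2*pi*(int p - int a)/M)"
      using M0 by (simp add: field_simps)
    finally show ?thesis by (simp add: Complex.DeMoivre)
  qed
  then have "(\<Sum>k<M. cnj (cis (2*pi/M))^(k*a) * cis (2*pi/M)^(k*p)) = (\<Sum>k<M. cis (2*pi*(int p - int a)/M)^k)"
    by simp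
  also have "\<dots> = (if int p - int a = 0 then of_nat M else 0)"
    by (rule root_sum[OF M0]) (use M in auto)
  finally show ?thesis by simp
qed




lemma mi_irrefl: "\<not> mi_less b b" by (auto simp: mi_less_def)
lemma mi_trans: "mi_less a b \<Longrightarrow> mi_less b c \<Longrightarrow> mi_less a c"
  by (auto simp: mi_less_def)
lemma mi_total: "b \<noteq> b' \<Longrightarrow> mi_less b b' \<or> mi_less b' b"
  by (cases b; cases b') (auto simp: mi_less_def mlen_def)

lemma fin_pred: "finite {g. mi_less g b}"
proof -
  have "{g. mi_less g b} \<subseteq> {..mlen b} \<times> {..mlen b}"
    by (auto simp: mi_less_def mlen_def)
  then show ?thesis by (rule finite_subset) simp
qed

definition rk :: "nat \<times> nat \<Rightarrow> nat" where "rk b = card {g. mi_less g b}"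

lemma rk_mono: "mi_less b b' \<Longrightarrow> rk b < rk b'"
  unfolding rk_def
proof (rule psubset_card_mono[OF fin_pred])
  assume bb: "mi_less b b'"
  have "{g. mi_less g b} \<subseteq> {g. mi_less g b'}" using bb mi_trans by blast
  moreover have "b \<in> {g. mi_less g b'}" "b \<notin> {g. mi_less g b}" using bb mi_irrefl by auto
  ultimately show "{g. mi_less g b} \<subset> {g. mi_less g b'}" by blast
qed

lemma rk_inj: "inj rk"
proof (rule injI)
  fix b b' assume "rk b = rk b'"
  show "b = b'"
  proof (rule ccontr)
    assume "b \<noteq> b'"
    then have "mi_less b b' \<or> mi_less b' b" by (rule mi_total)
    then have "rk b < rk b' \<or> rk b' < rk b" using rk_mono by blast
    with \<open>rk b = rk b'\<close> show False by simp
  qed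
qed

lemma rk_down: "rk ` {g. mi_less g b} = {..<rk b}"
proof (rule card_subset_eq)
  show "rk ` {g. mi_less g b} \<subseteq> {..<rk b}"
  proof (rule image_subsetI)
    fix g assume "g \<in> {g. mi_less g b}"
    then show "rk g \<in> {..<rk b}" using rk_mono by simp
  qed
  have "card (rk ` {g. mi_less g b}) = card {g. mi_less g b}"
    by (rule card_image) (use rk_inj in \<open>auto intro: inj_on_subset\<close>)
  then show "card (rk ` {g. mi_less g b}) = card {..<rk b}" by (simp add: rk_def)
qed simp

lemma rk_surj: "\<exists>b. rk b = i"
proof -
  have inf: "infinite (UNIV :: (nat \<times> nat) set)" by (simp add: finite_prod)
  have "infinite (range rk)"
  proof
    assume "finite (range rk)"
    then have "finite (UNIV :: (nat \<times> nat) set)" by (rule finite_imageD) (rule rk_inj)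
    with inf show False by simp
  qed
  then obtain n where n: "n > i" "n \<in> range rk" by (meson infinite_nat_iff_unbounded)
  then obtain b where "rk b = n" by auto
  with n have "i \<in> rk ` {g. mi_less g b}" using rk_down by auto
  then show ?thesis by auto
qed

lemma rk_alpha: "rk (alpha i) = i"
proof -
  obtain b where b: "rk b = i" using rk_surj by blast
  have "card {g. mi_less g (alpha i)} = i" unfolding alpha_def
  proof (rule theI[of "\<lambda>b. card {g. mi_less g b} = i" b])
    show "card {g. mi_less g b} = i" using b by (simp add: rk_def)
    show "card {g. mi_less g y} = i \<Longrightarrow> y = b" for y
      using b rk_inj by (metis injD rk_def)
  qed
  then show ?thesis by (simp add: rk_def)
qed

lemma alpha_rk: "alpha (rk b) = b"
  using rk_alpha rk_inj by (metis injD)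

lemma alpha_lt: "j < i \<Longrightarrow> mi_less (alpha j) (alpha i)"
proof -
  assume ji: "j < i"
  have "alpha j \<noteq> alpha i" using ji rk_alpha by (metis less_irrefl)
  then have "mi_less (alpha j) (alpha i) \<or> mi_less (alpha i) (alpha j)" by (rule mi_total)
  moreover have "\<not> mi_less (alpha i) (alpha j)"
  proof
    assume "mi_less (alpha i) (alpha j)"
    then have "rk (alpha i) < rk (alpha j)" by (rule rk_mono)
    with ji show False by (simp add: rk_alpha)
  qed
  ultimately show ?thesis by blast
qed

lemma alpha_lt_mlen: "j < i \<Longrightarrow> mlen (alpha j) \<le> mlen (alpha i)"
  using alpha_lt by (fastforce simp: mi_less_def)

lemma alpha_lt_ne: "j < i \<Longrightarrow> alpha j \<noteq> alpha i"
  using alpha_lt mi_irrefl by metis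

lemma rk00: "rk (0,0) = 0"
proof -
  have "{g. mi_less g (0,0)} = {}" by (auto simp: mi_less_def mlen_def)
  then show ?thesis unfolding rk_def by (metis card.empty)
qed

lemma deg_ge1: "0 < i \<Longrightarrow> 1 \<le> deg i"
proof -
  assume i: "0 < i"
  have "alpha i \<noteq> (0,0)" using i by (metis rk_alpha rk00 less_irrefl)
  then show ?thesis by (cases "alpha i") (auto simp: deg_def mlen_def)
qed

lemma rkNN_mono: "strict_mono (\<lambda>N. rk (Suc N, Suc N))"
  by (rule strict_monoI_Suc) (auto intro!: rk_mono simp: mi_less_def mlen_def)




lemma Kb_comp: "z \<in> Kb \<Longrightarrow> cmod (fst z) \<le> 1 \<and> cmod (snd z) \<le> 1"
proof -
  assume "z \<in> Kb"
  then have h: "(cmod (fst z))^2 + (cmod (snd z))^2 \<le> 1" by (simp add: Kb_def)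
  have "(cmod (fst z))^2 \<le> 1" using h zero_le_power2[of "cmod (snd z)"] by linarith
  moreover have "(cmod (snd z))^2 \<le> 1" using h zero_le_power2[of "cmod (fst z)"] by linarith
  ultimately have "(cmod (fst z))^2 \<le> 1" "(cmod (snd z))^2 \<le> 1" by auto
  then show ?thesis by (metis abs_norm_cancel abs_square_le_1)
qed

lemma monom_le1: "z \<in> Kb \<Longrightarrow> cmod (monom b z) \<le> 1"
  using Kb_comp[of z] by (simp add: monom_def norm_mult norm_power power_le_one mult_le_one)

lemma Ppoly_bound: "z \<in> Kb \<Longrightarrow> cmod (Ppoly i c z) \<le> 1 + (\<Sum>j<i. cmod (c j))"
proof -
  assume z: "z \<in> Kb"
  have "cmod (Ppoly i c z) \<le> cmod (monom (alpha i) z) + cmod (\<Sum>j<i. c j * monom (alpha j) z)"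
    unfolding Ppoly_def by (rule norm_triangle_ineq)
  also have "\<dots> \<le> cmod (monom (alpha i) z) + (\<Sum>j<i. cmod (c j * monom (alpha j) z))"
    by (intro add_left_mono norm_sum)
  also have "\<dots> \<le> 1 + (\<Sum>j<i. cmod (c j))"
    using monom_le1[OF z] by (intro add_mono sum_mono) (auto simp: norm_mult mult_left_le)
  finally show ?thesis .
qed

lemma bdd_Ppoly: "bdd_above ((\<lambda>z. \<bar>cmod (Ppoly i c z)\<bar>) ` Kb)"
  using Ppoly_bound by (intro bdd_aboveI2[where M="1 + (\<Sum>j<i. cmod (c j))"]) auto

lemma bdd_monom: "bdd_above ((\<lambda>z. \<bar>cmod (monom b z)\<bar>) ` Kb)"
  using monom_le1 by (intro bdd_aboveI2[where M=1]) auto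

lemma Kb_ne: "Kb \<noteq> {}"
proof -
  have "(0,0) \<in> Kb" by (simp add: Kb_def)
  then show ?thesis by blast
qed

definition Avg :: "nat \<Rightarrow> nat \<Rightarrow> nat \<Rightarrow> (pt \<Rightarrow> complex) \<Rightarrow> pt \<Rightarrow> complex" where
  "Avg M p q f z = (\<Sum>k<M. \<Sum>l<M. cnj (cis (2*pi/M))^(k*p) * cnj (cis (2*pi/M))^(l*q) *
      f (cis (2*pi/M)^k * fst z, cis (2*pi/M)^l * snd z))"

lemma Avg_monom:
  assumes "a < M" "b < M" "p < M" "q < M"
  shows "Avg M p q (monom (a,b)) z = (if (a,b) = (p,q) then of_nat M * of_nat M * monom (a,b) z else 0)"
proof -
  define \<omega> where "\<omega> = cis (2*pi/M)"
  have "Avg M p q (monom (a,b)) z = (\<Sum>k<M. \<Sum>l<M. (cnj \<omega>^(k*p) * \<omega>^(k*a)) * ((cnj \<omega>^(l*q) * \<omega>^(l*b)) * monom (a,b) z))"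
    unfolding Avg_def \<omega>_def[symmetric]
    by (intro sum.cong refl) (simp add: monom_def power_mult_distrib power_mult[symmetric] mult.commute mult.left_commute)
  also have "\<dots> = (\<Sum>k<M. cnj \<omega>^(k*p) * \<omega>^(k*a)) * (\<Sum>l<M. cnj \<omega>^(l*q) * \<omega>^(l*b)) * monom (a,b) z"
    by (simp only: sum_product sum_distrib_right sum_distrib_left mult.assoc) (rule sum.swap)
  also have "(\<Sum>k<M. cnj \<omega>^(k*p) * \<omega>^(k*a)) = (if a = p then of_nat M else 0)"
    using root_orth[of p M a] assms unfolding \<omega>_def by simp
  also have "(\<Sum>l<M. cnj \<omega>^(l*q) * \<omega>^(l*b)) = (if b = q then of_nat M else 0)"
    using root_orth[of q M b] assms unfolding \<omega>_def by simp
  finally show ?thesis by auto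
qed

lemma Avg_add: "Avg M p q (\<lambda>w. f w + g w) z = Avg M p q f z + Avg M p q g z"
  by (simp add: Avg_def distrib_left sum.distrib)

lemma Avg_sum: "Avg M p q (\<lambda>w. \<Sum>j\<in>J. c j * f j w) z = (\<Sum>j\<in>J. c j * Avg M p q (f j) z)"
  unfolding Avg_def
  by (simp add: sum_distrib_left mult.commute mult.left_commute sum.swap[of _ J])

lemma Avg_Ppoly:
  assumes ai: "alpha i = (p,q)" and M: "M = p + q + 1"
  shows "Avg M p q (Ppoly i c) z = of_nat M * of_nat M * monom (p,q) z"
proof -
  have Pp: "Ppoly i c = (\<lambda>w. monom (alpha i) w + (\<Sum>j<i. c j * monom (alpha j) w))"
    by (simp add: Ppoly_def[abs_def])
  have zero: "Avg M p q (monom (alpha j)) z = 0" if j: "j < i" for j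
  proof -
    obtain a b where ab: "alpha j = (a,b)" by fastforce
    have "a + b \<le> p + q" using alpha_lt_mlen[OF j] ai ab by (simp add: mlen_def)
    moreover have "(a,b) \<noteq> (p,q)" using alpha_lt_ne[OF j] ai ab by simp
    ultimately show ?thesis unfolding ab using M by (subst Avg_monom) auto
  qed
  show ?thesis unfolding Pp Avg_add Avg_sum using zero M ai by (simp add: Avg_monom)
qed

lemma monom_le_sup:
  assumes ai: "alpha i = (p,q)" and z: "z \<in> Kb"
  shows "cmod (monom (p,q) z) \<le> supnorm Kb (\<lambda>z. cmod (Ppoly i c z))"
proof -
  define M where "M = p + q + 1"
  define \<omega> where "\<omega> = cis (2*pi/M)"
  define S where "S = supnorm Kb (\<lambda>z. cmod (Ppoly i c z))"
  have M0: "0 < M" by (simp add: M_def)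
  have \<omega>1: "cmod \<omega> = 1" by (simp add: \<omega>_def)
  have pts: "(\<omega>^k * fst z, \<omega>^l * snd z) \<in> Kb" for k l
    using z by (simp add: Kb_def \<omega>_def norm_mult norm_power)
  have leS: "cmod (Ppoly i c w) \<le> S" if "w \<in> Kb" for w
    unfolding S_def supnorm_def using that
    by (metis (no_types, lifting) abs_norm_cancel bdd_Ppoly cSUP_upper)
  have "of_nat M * of_nat M * cmod (monom (p,q) z) = cmod (Avg M p q (Ppoly i c) z)"
    using Avg_Ppoly[OF ai M_def] by (simp add: norm_mult)
  also have "\<dots> \<le> (\<Sum>k<M. \<Sum>l<M. cmod (cnj \<omega>^(k*p) * cnj \<omega>^(l*q) * Ppoly i c (\<omega>^k * fst z, \<omega>^l * snd z)))"
    unfolding Avg_def \<omega>_def[symmetric] by (rule order_trans[OF norm_sum sum_mono[OF norm_sum]])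
  also have "\<dots> \<le> (\<Sum>k<M. \<Sum>l<M. S)"
    using leS[OF pts] by (intro sum_mono) (simp add: norm_mult norm_power \<omega>1)
  also have "\<dots> = of_nat M * of_nat M * S" by simp
  finally have "real M * real M * cmod (monom (p,q) z) \<le> real M * real M * S" by simp
  then show ?thesis using M0 by (simp add: S_def)
qed

lemma tcheb_eq: "t_cheb Kb i = supnorm Kb (\<lambda>z. cmod (monom (alpha i) z))"
proof -
  obtain p q where ai: "alpha i = (p,q)" by fastforce
  have ge: "supnorm Kb (\<lambda>z. cmod (monom (alpha i) z)) \<le> supnorm Kb (\<lambda>z. cmod (Ppoly i c z))" for c
    unfolding supnorm_def[of _ "\<lambda>z. cmod (monom (alpha i) z)"]
    by (rule cSUP_least[OF Kb_ne]) (use monom_le_sup[OF ai] ai in \<open>simp add: supnorm_def\<close>)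
  have eq0: "Ppoly i (\<lambda>_. 0) = monom (alpha i)" by (simp add: Ppoly_def[abs_def])
  show ?thesis unfolding t_cheb_def
    by (rule cInf_eq_minimum) (use ge eq0 in \<open>auto intro: exI[of _ "\<lambda>_. 0"]\<close>)
qed

lemma sm_lower: "(1 / sqrt 2) ^ (a + b) \<le> supnorm Kb (\<lambda>z. cmod (monom (a,b) z))"
proof -
  define w0 where "w0 = (complex_of_real (1 / sqrt 2), complex_of_real (1 / sqrt 2))"
  have c: "cmod (complex_of_real (1 / sqrt 2)) = 1 / sqrt 2" by (simp only: norm_of_real) simp
  have "(1 / sqrt 2::real)^2 = 1/2" by (simp add: power_divide)
  then have w0: "w0 \<in> Kb" unfolding w0_def Kb_def by (simp only: c fst_conv snd_conv mem_Collect_eq)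
  have "(1 / sqrt 2) ^ (a + b) = \<bar>cmod (monom (a,b) w0)\<bar>"
    by (simp add: w0_def monom_def norm_mult norm_power power_add norm_divide)
  also have "\<dots> \<le> supnorm Kb (\<lambda>z. cmod (monom (a,b) z))"
    unfolding supnorm_def by (rule cSUP_upper[OF w0 bdd_monom])
  finally show ?thesis .
qed

lemma sm_NN: "supnorm Kb (\<lambda>z. cmod (monom (N,N) z)) = (1/2) ^ N"
proof (rule antisym)
  show "supnorm Kb (\<lambda>z. cmod (monom (N,N) z)) \<le> (1/2) ^ N"
    unfolding supnorm_def
  proof (rule cSUP_least[OF Kb_ne])
    fix z assume z: "z \<in> Kb"
    have h: "(cmod (fst z))^2 + (cmod (snd z))^2 \<le> 1" using z by (simp add: Kb_def)
    have "0 \<le> (cmod (fst z) - cmod (snd z))^2" by simp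
    then have "cmod (fst z) * cmod (snd z) \<le> 1/2" using h by (simp add: power2_eq_square algebra_simps)
    then have "(cmod (fst z) * cmod (snd z)) ^ N \<le> (1/2) ^ N" by (intro power_mono) auto
    then show "\<bar>cmod (monom (N, N) z)\<bar> \<le> (1/2) ^ N"
      by (simp add: monom_def norm_mult norm_power power_mult_distrib)
  qed
  have "(1 / sqrt 2::real) ^ (N + N) = ((1 / sqrt 2)^2) ^ N"
    by (simp only: power_mult[symmetric] mult_2)
  also have "(1 / sqrt 2::real)^2 = 1/2" by (simp add: power_divide)
  finally have "(1/2::real) ^ N = (1 / sqrt 2) ^ (N + N)" by simp
  then show "(1/2) ^ N \<le> supnorm Kb (\<lambda>z. cmod (monom (N,N) z))" using sm_lower[of N N] by simp
qed




lemma pw: "0 < d \<Longrightarrow> ((1 / sqrt 2) ^ d) powr (1 / real d) = 1 / sqrt 2"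
proof -
  assume d: "0 < d"
  have "((1 / sqrt 2 :: real) ^ d) = (1 / sqrt 2) powr real d" by (simp add: powr_realpow)
  then have "((1 / sqrt 2) ^ d) powr (1 / real d) = (1 / sqrt 2) powr (real d * (1 / real d))"
    by (simp add: powr_powr)
  also have "real d * (1 / real d) = 1" using d by simp
  finally show ?thesis by simp
qed

lemma sqrt_half_pow: "(1 / sqrt 2 :: real) ^ (2 * N) = (1/2) ^ N"
proof -
  have "(1 / sqrt 2 :: real) ^ (2 * N) = ((1 / sqrt 2)^2) ^ N" by (simp only: power_mult)
  also have "(1 / sqrt 2::real)^2 = 1/2" by (simp add: power_divide)
  finally show ?thesis .
qed

lemma tcheb_NN: "alpha i = (N, N) \<Longrightarrow> t_cheb Kb i = (1/2) ^ N"
  by (simp add: tcheb_eq sm_NN)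

lemma X_lower:
  assumes i: "0 < i"
  shows "1 / sqrt 2 \<le> t_cheb Kb i powr (1 / real (deg i))"
proof -
  obtain a b where ab: "alpha i = (a, b)" by fastforce
  have d: "deg i = a + b" by (simp add: deg_def ab mlen_def)
  have d0: "0 < deg i" using deg_ge1[OF i] by simp
  have "(1 / sqrt 2) ^ deg i \<le> t_cheb Kb i" using sm_lower[of a b] by (simp add: tcheb_eq ab d)
  then have "((1 / sqrt 2) ^ deg i) powr (1 / real (deg i)) \<le> t_cheb Kb i powr (1 / real (deg i))"
    by (intro powr_mono2) auto
  then show ?thesis using pw[OF d0] by simp
qed

lemma X_NN:
  assumes "alpha i = (N, N)" "1 \<le> N"
  shows "t_cheb Kb i powr (1 / real (deg i)) = 1 / sqrt 2"
proof -
  have d: "deg i = 2 * N" using assms by (simp add: deg_def mlen_def)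
  have "t_cheb Kb i = (1 / sqrt 2) ^ (2 * N)" using tcheb_NN[OF assms(1)] sqrt_half_pow by simp
  then show ?thesis using pw[of "2*N"] assms(2) d by simp
qed

lemma tau_Kb: "tau_minus Kb = ereal (1 / sqrt 2)"
proof (rule antisym)
  define X where "X i = ereal (t_cheb Kb i powr (1 / real (deg i)))" for i
  define r where "r N = rk (Suc N, Suc N)" for N
  have sm: "strict_mono r" using rkNN_mono by (simp add: r_def[abs_def])
  have "(X \<circ> r) = (\<lambda>_. ereal (1 / sqrt 2))"
  proof
    fix N
    have "alpha (r N) = (Suc N, Suc N)" by (simp add: r_def alpha_rk)
    then show "(X \<circ> r) N = ereal (1 / sqrt 2)" using X_NN[of "r N" "Suc N"] by (simp add: X_def)
  qed
  then have "liminf X \<le> ereal (1 / sqrt 2)"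
    using liminf_subseq_mono[OF sm, of X] by (simp add: Liminf_const)
  then show "tau_minus Kb \<le> ereal (1 / sqrt 2)" by (simp add: tau_minus_def X_def[abs_def])
  have "eventually (\<lambda>i. ereal (1 / sqrt 2) \<le> X i) sequentially"
    using eventually_gt_at_top[of 0] by eventually_elim (simp add: X_def X_lower)
  then have "ereal (1 / sqrt 2) \<le> liminf X" by (rule Liminf_bounded)
  then show "ereal (1 / sqrt 2) \<le> tau_minus Kb" by (simp add: tau_minus_def X_def[abs_def])
qed

theorem mainTheorem5:
  fixes K :: "(complex \<times> complex) set"
  assumes "K = {z. (cmod (fst z))\<^sup>2 + (cmod (snd z))\<^sup>2 \<le> 1}"
  shows "tau_minus K = ereal (1 / sqrt 2)
    \<and> cap_c K = ereal (1 / sqrt 2)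
    \<and> cap_C K = 1
    \<and> (\<forall>i N. N \<ge> 1 \<and> alpha i = (N, N) \<longrightarrow>
          t_cheb K i = (1 / 2) ^ N \<and> widom_inf K (\<lambda>_. 1) i = 1)"
proof -
  have K: "K = Kb" using assms by (simp add: Kb_def)
  have W: "t_cheb Kb i = (1 / 2) ^ N \<and> widom_inf Kb (\<lambda>_. 1) i = 1" if "N \<ge> 1" "alpha i = (N, N)" for i N
  proof
    show t: "t_cheb Kb i = (1 / 2) ^ N" using tcheb_NN[OF that(2)] .
    have tw: "t_weighted Kb (\<lambda>_. 1) i = t_cheb Kb i" by (simp add: t_weighted_def t_cheb_def)
    have d: "deg i = 2 * N" using that by (simp add: deg_def mlen_def)
    show "widom_inf Kb (\<lambda>_. 1) i = 1"
      unfolding widom_inf_def tw t tau_Kb d using sqrt_half_pow[of N] by simp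
  qed
  show ?thesis unfolding K using tau_Kb capc_Kb capC_Kb W by blast
qed


end
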